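(* Let $U=(U_{i,j})$ and $V=(V_{j,k})$ be unitaries on qubits $q_1,\dots,q_n$ (indices in $\{0,1\}^n$). Introduce two copies $q'_1,\dots,q'_n$ and $q''_1,\dots,q''_n$ of the qubit variables, and let $\mu(U)=\sum_{i,j\in\{0,1\}^n}U_{i,j}\,q^{i}q'^{j}$ (an expression over $q_1,\dots,q_n,q'_1,\dots,q'_n$) and $\mu(V)=\sum_{j,k\in\{0,1\}^n}V_{j,k}\,q'^{j}q''^{k}$ (an expression over $q'_1,\dots,q'_n,q''_1,\dots,q''_n$). Then $$\exists q'_1,\dots,q'_n:\ \mu(U)\cdot\mu(V)\ \equiv\ \sum_{i,k\in\{0,1\}^n}(UV)_{i,k}\,q^{i}q''^{k},$$ i.e. the left-hand side is the representation of the matrix product $UV$ over $q_1,\dots,q_n,q''_1,\dots,q''_n$.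
   Context: Qubit variables are treated as Boolean variables. Write $q^0=\overline{q}$, $q^1=q$, and for $i\in\{0,1\}^n$, $q^i=q_1^{i_1}\cdots q_n^{i_n}$ (similarly $q'^j$, $q''^k$). A complex-valued Boolean expression is a formal sum $\sum_r c_rf_r$ with $c_r\in\mathbb{C}$ and $f_r$ classical Boolean expressions, defining the function $F(f)(b)=\sum_{r:f_r(b)=1}c_r$. Product: $(\sum_rc_rf_r)\cdot(\sum_sd_sg_s)=\sum_{r,s}(c_rd_s)(f_r\wedge g_s)$. Existential quantification: $\exists x:\sum_rc_rf_r=\sum_rc_r(\exists x:f_r)$, where for a Boolean expression $h$, $\exists x:h=h_{x=0}\vee h_{x=1}$; several variables are quantified one after another. Two expressions are equivalent ($\equiv$) if they define the same function. *)

theory Defs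
  imports Complex_Main
begin

text \<open>Qubit variables: Q m is q_(m+1), Q1 m is q'_(m+1), Q2 m is q''_(m+1).\<close>
datatype var = Q nat | Q1 nat | Q2 nat

type_synonym assignment = "var \<Rightarrow> bool"
type_synonym bexp = "assignment \<Rightarrow> bool"

text \<open>Complex-valued Boolean expression: a formal sum, i.e. a list of terms c_r f_r.\<close>
type_synonym cbexp = "(complex \<times> bexp) list"

definition sem :: "cbexp \<Rightarrow> assignment \<Rightarrow> complex" where
  "sem e b = (\<Sum>(c, f) \<leftarrow> e. if f b then c else 0)"

definition equiv_cb :: "cbexp \<Rightarrow> cbexp \<Rightarrow> bool" (infix "\<equiv>\<^sub>c" 50) where
  "e1 \<equiv>\<^sub>c e2 \<longleftrightarrow> sem e1 = sem e2"

definition times_cb :: "cbexp \<Rightarrow> cbexp \<Rightarrow> cbexp" where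
  "times_cb e1 e2 = [(c * d, \<lambda>b. f b \<and> g b). (c, f) \<leftarrow> e1, (d, g) \<leftarrow> e2]"

definition ex_bool :: "var \<Rightarrow> bexp \<Rightarrow> bexp" where
  "ex_bool x h = (\<lambda>b. h (b(x := False)) \<or> h (b(x := True)))"

definition ex_cb :: "var \<Rightarrow> cbexp \<Rightarrow> cbexp" where
  "ex_cb x e = map (\<lambda>(c, f). (c, ex_bool x f)) e"

definition exs_cb :: "var list \<Rightarrow> cbexp \<Rightarrow> cbexp" where
  "exs_cb xs e = fold ex_cb xs e"

definition idx :: "nat \<Rightarrow> bool list list" where
  "idx n = List.n_lists n [False, True]"

text \<open>Monomial v^i = v_1^{i_1} ... v_n^{i_n} for a family of variables v.\<close>
definition mono :: "(nat \<Rightarrow> var) \<Rightarrow> bool list \<Rightarrow> bexp" where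
  "mono v i = (\<lambda>b. \<forall>m < length i. b (v m) = i ! m)"

type_synonym mat = "bool list \<Rightarrow> bool list \<Rightarrow> complex"

definition unitary :: "nat \<Rightarrow> mat \<Rightarrow> bool" where
  "unitary n U \<longleftrightarrow>
     (\<forall>i\<in>set (idx n). \<forall>k\<in>set (idx n).
        (\<Sum>j\<leftarrow>idx n. U i j * cnj (U k j)) = (if i = k then 1 else 0)) \<and>
     (\<forall>i\<in>set (idx n). \<forall>k\<in>set (idx n).
        (\<Sum>j\<leftarrow>idx n. cnj (U j i) * U j k) = (if i = k then 1 else 0))"

definition mat_mult :: "nat \<Rightarrow> mat \<Rightarrow> mat \<Rightarrow> mat" where
  "mat_mult n U V = (\<lambda>i k. \<Sum>j\<leftarrow>idx n. U i j * V j k)"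

definition rep :: "nat \<Rightarrow> (nat \<Rightarrow> var) \<Rightarrow> (nat \<Rightarrow> var) \<Rightarrow> mat \<Rightarrow> cbexp" where
  "rep n v w M = [(M i j, \<lambda>b. mono v i b \<and> mono w j b). i \<leftarrow> idx n, j \<leftarrow> idx n]"

end

theory Submission
  imports Defs
begin

lemma fold_ex_cb: "fold ex_cb xs e = map (\<lambda>(c, f). (c, fold ex_bool xs f)) e"
  by (induction xs arbitrary: e) (auto simp: ex_cb_def case_prod_unfold)

lemma fold_ex_bool:
  "fold ex_bool xs f b = (\<exists>c. (\<forall>y. y \<notin> set xs \<longrightarrow> c y = b y) \<and> f c)"
proof (induction xs arbitrary: f b)
  case Nil
  then show ?case by (auto intro!: exI[of _ b])
next
  case (Cons x xs)
  show ?case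
  proof
    assume "fold ex_bool (x # xs) f b"
    then obtain c where c: "\<forall>y. y \<notin> set xs \<longrightarrow> c y = b y" "ex_bool x f c"
      using Cons by auto
    from c(2) obtain v where v: "f (c(x := v))" unfolding ex_bool_def by blast
    have "\<forall>y. y \<notin> set (x # xs) \<longrightarrow> (c(x := v)) y = b y"
    proof (intro allI impI)
      fix y assume "y \<notin> set (x # xs)"
      then have "y \<noteq> x" "y \<notin> set xs" by auto
      then show "(c(x := v)) y = b y" using c(1) by simp
    qed
    then show "\<exists>c. (\<forall>y. y \<notin> set (x # xs) \<longrightarrow> c y = b y) \<and> f c"
      using v by blast
  next
    assume "\<exists>c. (\<forall>y. y \<notin> set (x # xs) \<longrightarrow> c y = b y) \<and> f c"
    then obtain c where c: "\<forall>y. y \<notin> set (x # xs) \<longrightarrow> c y = b y" "f c" by blast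
    define c' where "c' = c(x := b x)"
    have "\<forall>y. y \<notin> set xs \<longrightarrow> c' y = b y" using c(1) by (auto simp: c'_def)
    moreover have "ex_bool x f c'" unfolding ex_bool_def c'_def
      using c(2) by (cases "c x") (auto simp: fun_upd_idem)
    ultimately show "fold ex_bool (x # xs) f b" using Cons by auto
  qed
qed

lemma idx_len: "i \<in> set (idx n) \<Longrightarrow> length i = n"
  by (simp add: idx_def set_n_lists)

lemma key:
  assumes "i \<in> set (idx n)" "j \<in> set (idx n)" "j' \<in> set (idx n)" "k \<in> set (idx n)"
  shows "fold ex_bool (map Q1 [0..<n])
     (\<lambda>b. (mono Q i b \<and> mono Q1 j b) \<and> (mono Q1 j' b \<and> mono Q2 k b)) b
   = (j = j' \<and> mono Q i b \<and> mono Q2 k b)"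
proof -
  have L: "length i = n" "length j = n" "length j' = n" "length k = n"
    using assms idx_len by auto
  have notQ: "Q m \<notin> set (map Q1 [0..<n])" for m by auto
  have notQ2: "Q2 m \<notin> set (map Q1 [0..<n])" for m by auto
  have FE: "fold ex_bool (map Q1 [0..<n])
     (\<lambda>b. (mono Q i b \<and> mono Q1 j b) \<and> (mono Q1 j' b \<and> mono Q2 k b)) b =
     (\<exists>c. (\<forall>y. y \<notin> set (map Q1 [0..<n]) \<longrightarrow> c y = b y) \<and>
        ((mono Q i c \<and> mono Q1 j c) \<and> (mono Q1 j' c \<and> mono Q2 k c)))"
    by (rule fold_ex_bool)
  show ?thesis
  proof
    assume "fold ex_bool (map Q1 [0..<n])
     (\<lambda>b. (mono Q i b \<and> mono Q1 j b) \<and> (mono Q1 j' b \<and> mono Q2 k b)) b"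
    from FE[THEN iffD1, OF this] obtain c where c: "\<forall>y. y \<notin> set (map Q1 [0..<n]) \<longrightarrow> c y = b y"
      "mono Q i c" "mono Q1 j c" "mono Q1 j' c" "mono Q2 k c"
      by blast
    have "j = j'"
    proof (rule nth_equalityI)
      show "length j = length j'" using L by simp
      fix m assume "m < length j"
      then have "m < n" using L by simp
      then show "j ! m = j' ! m" using c(3,4) L unfolding mono_def by metis
    qed
    moreover have "mono Q i b" unfolding mono_def
    proof (intro allI impI)
      fix m assume "m < length i"
      then have "c (Q m) = i ! m" using c(2) unfolding mono_def by blast
      then show "b (Q m) = i ! m" using c(1) notQ by metis
    qed
    moreover have "mono Q2 k b" unfolding mono_def
    proof (intro allI impI)
      fix m assume "m < length k"
      then have "c (Q2 m) = k ! m" using c(5) unfolding mono_def by blast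
      then show "b (Q2 m) = k ! m" using c(1) notQ2 by metis
    qed
    ultimately show "j = j' \<and> mono Q i b \<and> mono Q2 k b" by blast
  next
    assume h: "j = j' \<and> mono Q i b \<and> mono Q2 k b"
    define c where "c = (\<lambda>v. case v of Q1 m \<Rightarrow> (if m < n then j ! m else b v) | _ \<Rightarrow> b v)"
    have c1: "\<forall>y. y \<notin> set (map Q1 [0..<n]) \<longrightarrow> c y = b y"
    proof (intro allI impI)
      fix y assume y: "y \<notin> set (map Q1 [0..<n])"
      show "c y = b y"
      proof (cases y)
        case (Q1 m)
        then have "\<not> m < n" using y by auto
        then show ?thesis using Q1 by (simp add: c_def)
      qed (simp_all add: c_def)
    qed
    have cQ: "c (Q m) = b (Q m)" "c (Q2 m) = b (Q2 m)" for m by (simp_all add: c_def)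
    have cQ1: "m < n \<Longrightarrow> c (Q1 m) = j ! m" for m by (simp add: c_def)
    have "mono Q i c" using h cQ unfolding mono_def by simp
    moreover have "mono Q2 k c" using h cQ unfolding mono_def by simp
    moreover have "mono Q1 j c" using cQ1 L unfolding mono_def by simp
    moreover have "mono Q1 j' c" using cQ1 L h unfolding mono_def by simp
    ultimately show "fold ex_bool (map Q1 [0..<n])
     (\<lambda>b. (mono Q i b \<and> mono Q1 j b) \<and> (mono Q1 j' b \<and> mono Q2 k b)) b"
      using c1 by (intro FE[THEN iffD2] exI[of _ c]) blast
  qed
qed

lemma sl: "(\<Sum>x\<leftarrow>idx n. f x) = (\<Sum>x\<in>set (idx n). f x)"
  by (simp add: sum_list_distinct_conv_sum_set idx_def distinct_n_lists)

lemma sem_concat: "sem (concat es) b = (\<Sum>e\<leftarrow>es. sem e b)"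
  by (induction es) (auto simp: sem_def)

lemma sem_map: "sem (map (\<lambda>x. (h x, g x)) xs) b = (\<Sum>x\<leftarrow>xs. if g x b then h x else 0)"
  by (induction xs) (auto simp: sem_def)

lemma sl_concat: "sum_list (concat xss) = sum_list (map sum_list (xss :: complex list list))"
  by (induction xss) auto

lemma alg:
  fixes U V :: mat and P :: "bool list \<Rightarrow> bool list \<Rightarrow> bool"
  assumes fin: "finite I"
  shows "(\<Sum>i\<in>I. \<Sum>j\<in>I. \<Sum>j'\<in>I. \<Sum>k\<in>I. if j = j' then (if P i k then U i j * V j' k else 0) else 0)
       = (\<Sum>i\<in>I. \<Sum>k\<in>I. if P i k then (\<Sum>j\<in>I. U i j * V j k) else 0)"
proof -
  have S1: "(\<Sum>j'\<in>I. \<Sum>k\<in>I. if j = j' then (if P i k then U i j * V j' k else 0) else 0)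
      = (\<Sum>k\<in>I. if P i k then U i j * V j k else 0)" if "j \<in> I" for i j
  proof -
    have "(\<Sum>j'\<in>I. \<Sum>k\<in>I. if j = j' then (if P i k then U i j * V j' k else 0) else 0)
       = (\<Sum>k\<in>I. \<Sum>j'\<in>I. if j = j' then (if P i k then U i j * V j' k else 0) else 0)"
      by (rule sum.swap)
    also have "\<dots> = (\<Sum>k\<in>I. if P i k then U i j * V j k else 0)"
      using fin that by (simp add: sum.delta)
    finally show ?thesis .
  qed
  have S2: "(\<Sum>j\<in>I. \<Sum>k\<in>I. if P i k then U i j * V j k else 0)
      = (\<Sum>k\<in>I. if P i k then (\<Sum>j\<in>I. U i j * V j k) else 0)" for i
  proof -
    have "(\<Sum>j\<in>I. \<Sum>k\<in>I. if P i k then U i j * V j k else 0)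
      = (\<Sum>k\<in>I. \<Sum>j\<in>I. if P i k then U i j * V j k else 0)" by (rule sum.swap)
    also have "\<dots> = (\<Sum>k\<in>I. if P i k then (\<Sum>j\<in>I. U i j * V j k) else 0)"
    proof (rule sum.cong[OF refl])
      fix k assume "k \<in> I"
      show "(\<Sum>j\<in>I. if P i k then U i j * V j k else 0) = (if P i k then (\<Sum>j\<in>I. U i j * V j k) else 0)"
        by (cases "P i k") (simp_all only: if_True if_False sum.neutral_const)
    qed
    finally show ?thesis .
  qed
  have "(\<Sum>i\<in>I. \<Sum>j\<in>I. \<Sum>j'\<in>I. \<Sum>k\<in>I. if j = j' then (if P i k then U i j * V j' k else 0) else 0)
     = (\<Sum>i\<in>I. \<Sum>j\<in>I. \<Sum>k\<in>I. if P i k then U i j * V j k else 0)"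
    by (rule sum.cong[OF refl], rule sum.cong[OF refl], rule S1)
  also have "\<dots> = (\<Sum>i\<in>I. \<Sum>k\<in>I. if P i k then (\<Sum>j\<in>I. U i j * V j k) else 0)"
    by (rule sum.cong[OF refl], rule S2)
  finally show ?thesis .
qed

lemma ifand: "(if a \<and> c then x else y) = (if a then (if c then x else y) else y)"
  by simp

lemma key':
  assumes "i \<in> set (idx n)" "j \<in> set (idx n)" "j' \<in> set (idx n)" "k \<in> set (idx n)"
  shows "(if fold ex_bool (map Q1 [0..<n])
     (\<lambda>b. (Defs.mono Q i b \<and> Defs.mono Q1 j b) \<and> (Defs.mono Q1 j' b \<and> Defs.mono Q2 k b)) b
      then X else 0)
   = (if j = j' then (if Defs.mono Q i b \<and> Defs.mono Q2 k b then X else (0::complex)) else 0)"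
proof -
  have "fold ex_bool (map Q1 [0..<n])
     (\<lambda>b. (Defs.mono Q i b \<and> Defs.mono Q1 j b) \<and> (Defs.mono Q1 j' b \<and> Defs.mono Q2 k b)) b
   = (j = j' \<and> Defs.mono Q i b \<and> Defs.mono Q2 k b)" by (rule key[OF assms])
  then show ?thesis by (simp only: ifand)
qed

lemma E:
  "sem (exs_cb (map Q1 [0..<n]) (times_cb (rep n Q Q1 U) (rep n Q1 Q2 V))) b
    = (\<Sum>i\<in>set (idx n). \<Sum>j\<in>set (idx n). \<Sum>j'\<in>set (idx n). \<Sum>k\<in>set (idx n).
         if j = j' then (if Defs.mono Q i b \<and> Defs.mono Q2 k b then U i j * V j' k else 0) else 0)"
  apply (simp only: exs_cb_def fold_ex_cb times_cb_def rep_def map_concat map_map o_def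
        case_prod_unfold fst_conv snd_conv sem_concat sem_map sl_concat)
  apply (subst sl, rule sum.cong[OF refl])+
  apply (rule key')
  apply assumption+
  done

lemma R: "sem (rep n Q Q2 (mat_mult n U V)) b
    = (\<Sum>i\<in>set (idx n). \<Sum>k\<in>set (idx n).
         if Defs.mono Q i b \<and> Defs.mono Q2 k b then (\<Sum>j\<in>set (idx n). U i j * V j k) else 0)"
  apply (simp only: rep_def mat_mult_def map_concat map_map o_def case_prod_unfold fst_conv snd_conv
     sem_concat sem_map sl_concat)
  apply (subst sl, rule sum.cong[OF refl])+
  apply (subst sl)
  apply (rule refl)
  done

theorem theorem5:
  fixes n :: nat and U V :: mat
  assumes "unitary n U" and "unitary n V"
  shows "exs_cb (map Q1 [0..<n]) (times_cb (rep n Q Q1 U) (rep n Q1 Q2 V))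
           \<equiv>\<^sub>c rep n Q Q2 (mat_mult n U V)"
  unfolding equiv_cb_def
proof
  fix b
  have fin: "finite (set (idx n))" by (rule finite_set)
  have "sem (exs_cb (map Q1 [0..<n]) (times_cb (rep n Q Q1 U) (rep n Q1 Q2 V))) b
    = (\<Sum>i\<in>set (idx n). \<Sum>j\<in>set (idx n). \<Sum>j'\<in>set (idx n). \<Sum>k\<in>set (idx n).
         if j = j' then (if Defs.mono Q i b \<and> Defs.mono Q2 k b then U i j * V j' k else 0) else 0)"
    by (rule E)
  also have "\<dots> = (\<Sum>i\<in>set (idx n). \<Sum>k\<in>set (idx n).
         if Defs.mono Q i b \<and> Defs.mono Q2 k b then (\<Sum>j\<in>set (idx n). U i j * V j k) else 0)"
    by (rule alg[OF fin])
  also have "\<dots> = sem (rep n Q Q2 (mat_mult n U V)) b"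
    by (rule R[symmetric])
  finally show "sem (exs_cb (map Q1 [0..<n]) (times_cb (rep n Q Q1 U) (rep n Q1 Q2 V))) b =
        sem (rep n Q Q2 (mat_mult n U V)) b" .
qed

end
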